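(* Let $F$ be a field, let $M\geq 2$ be an integer, and let $\omega\in F$ be a primitive $(M-1)$-th root of unity. Let $k_1,\ldots,k_N$ be natural numbers with $\sum_{i=1}^N k_i=M$. Then in the polynomial ring $F[x_1,\ldots,x_N]$, \[ \sum_{j=1}^{M-1}\prod_{i=1}^N(\omega^j+x_i)^{k_i}=(M-1)\prod_{i=1}^N x_i^{k_i}+(M-1)\sum_{i=1}^N k_ix_i+\mathbf{1}_M(2). \]
   Context: The indicator function is $\mathbf{1}_M(x)=1$ if $x=M$ and $\mathbf{1}_M(x)=0$ if $x\neq M$; so $\mathbf{1}_M(2)$ equals $1$ if $M=2$ and $0$ otherwise. *)

theory Defs
  imports Main "HOL-Library.Poly_Mapping"
begin

text \<open>Multivariate polynomials over 'a in variables x_0, x_1, ... : a polynomial is a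
  finitely supported map from monomials (finitely supported exponent vectors
  nat \<Rightarrow>0 nat) to coefficients. Multiplication is the convolution product of
  Poly_Mapping, so this is the polynomial ring 'a[x_0, x_1, ...].\<close>
type_synonym 'a mpoly = "(nat \<Rightarrow>\<^sub>0 nat) \<Rightarrow>\<^sub>0 'a"

definition mpVar :: "nat \<Rightarrow> 'a::comm_ring_1 mpoly" where
  "mpVar i = Poly_Mapping.single (Poly_Mapping.single i 1) 1"

definition mpConst :: "'a::comm_ring_1 \<Rightarrow> 'a mpoly" where
  "mpConst c = Poly_Mapping.single 0 c"

definition primitive_root_of_unity :: "nat \<Rightarrow> 'a::field \<Rightarrow> bool" where
  "primitive_root_of_unity n w \<longleftrightarrow> 0 < n \<and> w ^ n = 1 \<and> (\<forall>d. 0 < d \<and> d < n \<longrightarrow> w ^ d \<noteq> 1)"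

definition indicator_at :: "nat \<Rightarrow> nat \<Rightarrow> 'a::comm_ring_1" where
  "indicator_at M x = (if x = M then 1 else 0)"

end

theory Submission
  imports Defs "HOL-Computational_Algebra.Polynomial"
begin

lemma mpConst_add: "mpConst (a + b) = mpConst a + (mpConst b :: 'a::comm_ring_1 mpoly)"
  by (simp add: mpConst_def single_add)
lemma mpConst_mult: "mpConst (a * b) = mpConst a * (mpConst b :: 'a::comm_ring_1 mpoly)"
  by (simp add: mpConst_def mult_single)
lemma mpConst_one: "mpConst 1 = (1 :: 'a::comm_ring_1 mpoly)"
  by (simp add: mpConst_def)
lemma mpConst_zero: "mpConst 0 = (0 :: 'a::comm_ring_1 mpoly)"
  by (simp add: mpConst_def)
lemma mpConst_of_nat: "mpConst (of_nat n) = (of_nat n :: 'a::comm_ring_1 mpoly)"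
  by (simp add: mpConst_def)
lemma mpConst_power: "mpConst (a ^ n) = (mpConst a ^ n :: 'a::comm_ring_1 mpoly)"
  by (induct n) (simp_all add: mpConst_one mpConst_mult)
lemma mpConst_sum: "finite A \<Longrightarrow> mpConst (\<Sum>x\<in>A. f x) = (\<Sum>x\<in>A. mpConst (f x) :: 'a::comm_ring_1 mpoly)"
  by (induct A rule: finite_induct) (simp_all add: mpConst_zero mpConst_add)

lemma lin_step:
  fixes p :: "'b::comm_ring_1 poly"
  assumes "coeff p (degree p) = 1"
  shows "degree (p * [:a,1:]) = Suc (degree p) \<and> coeff (p * [:a,1:]) (Suc (degree p)) = 1
     \<and> coeff (p * [:a,1:]) (degree p) = a + coeff (pCons 0 p) (degree p)"
proof -
  have e: "p * [:a,1:] = smult a p + pCons 0 p" by simp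
  have c1: "coeff (p * [:a,1:]) (Suc (degree p)) = 1"
    unfolding e using assms by (simp add: coeff_eq_0)
  have "degree (p * [:a,1:]) \<le> Suc (degree p)"
    unfolding e by (metis degree_add_le degree_pCons_le degree_smult_le le_SucI)
  moreover have "degree (p * [:a,1:]) \<ge> Suc (degree p)"
    using c1 by (intro le_degree) simp
  ultimately show ?thesis using c1 assms unfolding e by simp
qed

lemma pow_step:
  fixes p :: "'b::comm_ring_1 poly"
  assumes "coeff p (degree p) = 1"
  shows "degree (p * [:a,1:]^k) = degree p + k \<and> coeff (p * [:a,1:]^k) (degree (p * [:a,1:]^k)) = 1
     \<and> coeff (pCons 0 (p * [:a,1:]^k)) (degree (p * [:a,1:]^k)) = coeff (pCons 0 p) (degree p) + of_nat k * a"
proof (induct k)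
  case 0
  then show ?case using assms by simp
next
  case (Suc k)
  let ?q = "p * [:a,1:]^k"
  have eq: "p * [:a,1:]^Suc k = ?q * [:a,1:]" by (simp add: algebra_simps)
  from lin_step[of ?q a] Suc.hyps assms have
    d1: "degree (?q * [:a,1:]) = Suc (degree ?q)" and c1: "coeff (?q * [:a,1:]) (Suc (degree ?q)) = 1"
    and c2: "coeff (?q * [:a,1:]) (degree ?q) = a + coeff (pCons 0 ?q) (degree ?q)" by auto
  from Suc.hyps have h1: "degree ?q = degree p + k"
    and h3: "coeff (pCons 0 ?q) (degree ?q) = coeff (pCons 0 p) (degree p) + of_nat k * a" by blast+
  have "coeff (pCons 0 (?q * [:a,1:])) (degree (?q * [:a,1:])) = a + coeff (pCons 0 ?q) (degree ?q)"
    unfolding d1 coeff_pCons_Suc c2 by (rule refl)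
  also have "a + coeff (pCons 0 ?q) (degree ?q) = coeff (pCons 0 p) (degree p) + of_nat (Suc k) * a"
    unfolding h3 by (simp add: algebra_simps)
  finally have h4: "coeff (pCons 0 (?q * [:a,1:])) (degree (?q * [:a,1:])) = coeff (pCons 0 p) (degree p) + of_nat (Suc k) * a" .
  have h5: "degree (?q * [:a,1:]) = degree p + Suc k" unfolding d1 h1 by simp
  have h6: "coeff (?q * [:a,1:]) (degree (?q * [:a,1:])) = 1" unfolding d1 by (rule c1)
  show ?case unfolding eq using h4 h5 h6 by blast
qed

lemma prod_lin:
  fixes x :: "nat \<Rightarrow> 'b::comm_ring_1"
  assumes "finite A"
  shows "degree (\<Prod>i\<in>A. [:x i,1:]^k i) = (\<Sum>i\<in>A. k i)
    \<and> coeff (\<Prod>i\<in>A. [:x i,1:]^k i) (degree (\<Prod>i\<in>A. [:x i,1:]^k i)) = 1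
    \<and> coeff (pCons 0 (\<Prod>i\<in>A. [:x i,1:]^k i)) (degree (\<Prod>i\<in>A. [:x i,1:]^k i)) = (\<Sum>i\<in>A. of_nat (k i) * x i)"
  using assms
proof (induct A rule: finite_induct)
  case empty
  then show ?case by simp
next
  case (insert j A)
  let ?p = "\<Prod>i\<in>A. [:x i,1:]^k i"
  have eq: "(\<Prod>i\<in>insert j A. [:x i,1:]^k i) = ?p * [:x j,1:]^k j"
    using insert by (simp add: mult.commute)
  from insert.hyps have g1: "degree ?p = (\<Sum>i\<in>A. k i)" and g2: "coeff ?p (degree ?p) = 1"
    and g3: "coeff (pCons 0 ?p) (degree ?p) = (\<Sum>i\<in>A. of_nat (k i) * x i)" by blast+
  from pow_step[of ?p "x j" "k j", OF g2] have
    f1: "degree (?p * [:x j,1:]^k j) = degree ?p + k j"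
    and f2: "coeff (?p * [:x j,1:]^k j) (degree (?p * [:x j,1:]^k j)) = 1"
    and f3: "coeff (pCons 0 (?p * [:x j,1:]^k j)) (degree (?p * [:x j,1:]^k j)) = coeff (pCons 0 ?p) (degree ?p) + of_nat (k j) * x j"
    by blast+
  have s1: "(\<Sum>i\<in>insert j A. k i) = (\<Sum>i\<in>A. k i) + k j" using insert.hyps by simp
  have s2: "(\<Sum>i\<in>insert j A. of_nat (k i) * x i) = (\<Sum>i\<in>A. of_nat (k i) * x i) + of_nat (k j) * x j"
    using insert.hyps by (simp add: add.commute)
  have t1: "degree (?p * [:x j,1:]^k j) = (\<Sum>i\<in>A. k i) + k j" unfolding f1 g1 by (rule refl)
  have t3: "coeff (pCons 0 (?p * [:x j,1:]^k j)) (degree (?p * [:x j,1:]^k j)) = (\<Sum>i\<in>A. of_nat (k i) * x i) + of_nat (k j) * x j"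
    unfolding f3 g3 by (rule refl)
  show ?case unfolding eq s1 s2 by (intro conjI t1 f2 t3)
qed

lemma geo_zero:
  fixes w :: "'a::field"
  assumes "w ^ n = 1" "w \<noteq> 1"
  shows "(\<Sum>j=1..n. w ^ j) = 0"
  using assms by (simp add: sum_gp)

theorem lemma2:
  fixes \<omega> :: "'a::field" and M N :: nat and k :: "nat \<Rightarrow> nat"
  assumes "M \<ge> 2"
    and "primitive_root_of_unity (M - 1) \<omega>"
    and "(\<Sum>i=1..N. k i) = M"
  shows "(\<Sum>j=1..M-1. \<Prod>i=1..N. (mpConst (\<omega> ^ j) + mpVar i) ^ k i)
       = mpConst (of_nat (M - 1)) * (\<Prod>i=1..N. mpVar i ^ k i)
         + mpConst (of_nat (M - 1)) * (\<Sum>i=1..N. mpConst (of_nat (k i)) * mpVar i)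
         + mpConst (indicator_at M 2)"
proof -
  define Q where "Q = (\<Prod>i\<in>{1..N}. [:mpVar i,1:]^k i :: 'a mpoly poly)"
  have pl: "degree Q = (\<Sum>i\<in>{1..N}. k i) \<and> coeff Q (degree Q) = 1
     \<and> coeff (pCons 0 Q) (degree Q) = (\<Sum>i\<in>{1..N}. of_nat (k i) * mpVar i)"
    unfolding Q_def by (rule prod_lin) simp
  have dQ: "degree Q = M" using pl assms(3) by simp
  have lQ: "coeff Q M = 1" unfolding dQ[symmetric] using pl by blast
  have sQ0: "coeff (pCons 0 Q) M = (\<Sum>i\<in>{1..N}. of_nat (k i) * mpVar i)"
    unfolding dQ[symmetric] using pl by blast
  have "M = Suc (M - 1)" using assms(1) by simp
  then have sQ: "coeff Q (M - 1) = (\<Sum>i\<in>{1..N}. of_nat (k i) * mpVar i)"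
    using sQ0 by (metis coeff_pCons_Suc)
  have cQ: "coeff Q 0 = (\<Prod>i=1..N. mpVar i ^ k i)"
    unfolding Q_def poly_0_coeff_0[symmetric] by (simp add: poly_prod)
  have pQ: "poly Q y = (\<Prod>i=1..N. (y + mpVar i) ^ k i)" for y
    unfolding Q_def by (simp add: poly_prod add.commute)
  define g where "g d = (\<Sum>j=1..M-1. (\<omega> ^ d) ^ j)" for d
  have "(\<Sum>j=1..M-1. \<Prod>i=1..N. (mpConst (\<omega> ^ j) + mpVar i) ^ k i)
      = (\<Sum>j=1..M-1. \<Sum>d\<le>M. coeff Q d * mpConst (\<omega> ^ j) ^ d)"
  proof (rule sum.cong[OF refl])
    fix j
    have "(\<Prod>i=1..N. (y + mpVar i)^k i) = (\<Sum>d\<le>M. coeff Q d * y^d)" for y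
      unfolding pQ[symmetric] poly_altdef dQ by (rule refl)
    then show "(\<Prod>i=1..N. (mpConst (\<omega> ^ j) + mpVar i) ^ k i) = (\<Sum>d\<le>M. coeff Q d * mpConst (\<omega> ^ j) ^ d)" .
  qed
  also have "\<dots> = (\<Sum>d\<le>M. coeff Q d * mpConst (g d))"
    unfolding g_def
    by (subst sum.swap) (simp add: mpConst_sum sum_distrib_left mpConst_power power_mult[symmetric] mult.commute)
  also have "\<dots> = (\<Sum>d\<in>{0, M-1, M}. coeff Q d * mpConst (g d))"
  proof (rule sum.mono_neutral_right)
    show "\<forall>d\<in>{..M} - {0, M - 1, M}. coeff Q d * mpConst (g d) = 0"
    proof
      fix d assume d: "d \<in> {..M} - {0, M - 1, M}"
      have "\<omega> ^ d \<noteq> 1" using assms(2) d unfolding primitive_root_of_unity_def by auto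
      moreover have "(\<omega> ^ d) ^ (M-1) = 1" using assms(2) unfolding primitive_root_of_unity_def
        by (metis power_mult power_mult_distrib mult.commute power_one)
      ultimately have "g d = 0" unfolding g_def by (rule geo_zero[rotated])
      then show "coeff Q d * mpConst (g d) = 0" by (simp add: mpConst_zero)
    qed
  qed auto
  also have "\<dots> = coeff Q 0 * mpConst (g 0) + coeff Q (M-1) * mpConst (g (M-1)) + coeff Q M * mpConst (g M)"
    using assms(1) by (simp add: algebra_simps)
  finally have main: "(\<Sum>j=1..M-1. \<Prod>i=1..N. (mpConst (\<omega> ^ j) + mpVar i) ^ k i) =
     coeff Q 0 * mpConst (g 0) + coeff Q (M-1) * mpConst (g (M-1)) + coeff Q M * mpConst (g M)" .
  have w1: "\<omega> ^ (M-1) = 1" using assms(2) unfolding primitive_root_of_unity_def by auto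
  have g0: "g 0 = of_nat (M-1)" unfolding g_def by simp
  have g1: "g (M-1) = of_nat (M-1)" unfolding g_def using w1 by simp
  have gM: "g M = indicator_at M 2"
  proof (cases "M = 2")
    case True
    then show ?thesis using w1 unfolding g_def indicator_at_def by simp
  next
    case False
    have lt: "0 < (1::nat) \<and> 1 < M - 1" using assms(1) False by auto
    have "\<omega> ^ 1 \<noteq> 1" using assms(2) lt unfolding primitive_root_of_unity_def by blast
    then have "\<omega> \<noteq> 1" by simp
    moreover have "M = Suc (M - 1)" using assms(1) by simp
    then have wM: "\<omega> ^ M = \<omega>" using w1 by (metis power_Suc mult_1_right)
    ultimately have "\<omega> ^ M \<noteq> 1" by simp
    moreover have "(\<omega> ^ M) ^ (M-1) = 1" using w1 wM by simp
    ultimately have "g M = 0" unfolding g_def by (rule geo_zero[rotated])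
    then show ?thesis using False unfolding indicator_at_def by simp
  qed
  show ?thesis unfolding main g0 g1 gM cQ sQ lQ
    by (simp add: mpConst_of_nat mult.commute)
qed

end
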